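(* For every tree sequence $\pi$, the class $\mathcal{T}_\pi$ contains a BFD-tree, and any two BFD-trees in $\mathcal{T}_\pi$ are isomorphic.
   Context: A tree sequence is the degree sequence of some tree; $\mathcal{T}_\pi$ is the set of all trees with degree sequence $\pi$. For a connected graph with a chosen root $v_0$, a child of a vertex $w$ is a neighbor $v$ of $w$ with $\mathrm{dist}(v_0,v)=\mathrm{dist}(v_0,w)+1$. A BFD-ordering with root $v_0$ is a total ordering $\prec$ of the vertices arising from a breadth-first search starting at $v_0$ (so $v_0$ is first and vertices closer to $v_0$ precede vertices farther from $v_0$) such that: (B1) if $w_1\prec w_2$ then $v_1\prec v_2$ for every child $v_1$ of $w_1$ and every child $v_2$ of $w_2$; (B2) if $v\prec u$ then $d(v)\ge d(u)$, where $d$ denotes degree. A BFD-tree is a tree admitting a BFD-ordering for some root. *)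

theory Defs
  imports Main "HOL-Library.Multiset"
begin

definition graph :: "'a set \<Rightarrow> ('a \<Rightarrow> 'a \<Rightarrow> bool) \<Rightarrow> bool" where
  "graph V E \<longleftrightarrow> finite V \<and> (\<forall>u v. E u v \<longrightarrow> E v u) \<and> (\<forall>v. \<not> E v v)
     \<and> (\<forall>u v. E u v \<longrightarrow> u \<in> V \<and> v \<in> V)"

definition connected_graph :: "'a set \<Rightarrow> ('a \<Rightarrow> 'a \<Rightarrow> bool) \<Rightarrow> bool" where
  "connected_graph V E \<longleftrightarrow> (\<forall>u\<in>V. \<forall>v\<in>V. E\<^sup>*\<^sup>* u v)"

definition has_cycle :: "'a set \<Rightarrow> ('a \<Rightarrow> 'a \<Rightarrow> bool) \<Rightarrow> bool" where
  "has_cycle V E \<longleftrightarrow> (\<exists>vs. 3 \<le> length vs \<and> distinct vs \<and> set vs \<subseteq> V \<and>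
      (\<forall>i < length vs. E (vs ! i) (vs ! ((i + 1) mod length vs))))"

definition tree :: "'a set \<Rightarrow> ('a \<Rightarrow> 'a \<Rightarrow> bool) \<Rightarrow> bool" where
  "tree V E \<longleftrightarrow> graph V E \<and> V \<noteq> {} \<and> connected_graph V E \<and> \<not> has_cycle V E"

definition deg :: "'a set \<Rightarrow> ('a \<Rightarrow> 'a \<Rightarrow> bool) \<Rightarrow> 'a \<Rightarrow> nat" where
  "deg V E v = card {u \<in> V. E v u}"

definition degree_sequence :: "'a set \<Rightarrow> ('a \<Rightarrow> 'a \<Rightarrow> bool) \<Rightarrow> nat multiset" where
  "degree_sequence V E = image_mset (deg V E) (mset_set V)"

definition tree_sequence :: "nat multiset \<Rightarrow> bool" where
  "tree_sequence \<pi> \<longleftrightarrow> (\<exists>(V :: nat set) E. tree V E \<and> degree_sequence V E = \<pi>)"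

definition dist :: "('a \<Rightarrow> 'a \<Rightarrow> bool) \<Rightarrow> 'a \<Rightarrow> 'a \<Rightarrow> nat" where
  "dist E u v = (LEAST n. (E ^^ n) u v)"

definition child :: "('a \<Rightarrow> 'a \<Rightarrow> bool) \<Rightarrow> 'a \<Rightarrow> 'a \<Rightarrow> 'a \<Rightarrow> bool" where
  "child E v0 w v \<longleftrightarrow> E w v \<and> dist E v0 v = dist E v0 w + 1"

definition prec :: "'a list \<Rightarrow> 'a \<Rightarrow> 'a \<Rightarrow> bool" where
  "prec xs a b \<longleftrightarrow> (\<exists>i j. i < j \<and> j < length xs \<and> xs ! i = a \<and> xs ! j = b)"

definition BFD_ordering :: "'a set \<Rightarrow> ('a \<Rightarrow> 'a \<Rightarrow> bool) \<Rightarrow> 'a \<Rightarrow> 'a list \<Rightarrow> bool" where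
  "BFD_ordering V E v0 xs \<longleftrightarrow>
     distinct xs \<and> set xs = V \<and> v0 \<in> V \<and> xs ! 0 = v0 \<and>
     (\<forall>a b. prec xs a b \<longrightarrow> dist E v0 a \<le> dist E v0 b) \<and>
     (\<forall>w1 w2 v1 v2. prec xs w1 w2 \<longrightarrow> child E v0 w1 v1 \<longrightarrow> child E v0 w2 v2
        \<longrightarrow> prec xs v1 v2) \<and>
     (\<forall>v u. prec xs v u \<longrightarrow> deg V E v \<ge> deg V E u)"

definition BFD_tree :: "'a set \<Rightarrow> ('a \<Rightarrow> 'a \<Rightarrow> bool) \<Rightarrow> bool" where
  "BFD_tree V E \<longleftrightarrow> tree V E \<and> (\<exists>v0 xs. BFD_ordering V E v0 xs)"

definition isomorphic ::
  "'a set \<Rightarrow> ('a \<Rightarrow> 'a \<Rightarrow> bool) \<Rightarrow> 'b set \<Rightarrow> ('b \<Rightarrow> 'b \<Rightarrow> bool) \<Rightarrow> bool" where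
  "isomorphic V1 E1 V2 E2 \<longleftrightarrow>
     (\<exists>f. bij_betw f V1 V2 \<and> (\<forall>u\<in>V1. \<forall>v\<in>V1. E1 u v \<longleftrightarrow> E2 (f u) (f v)))"

end

theory Submission
  imports Defs
begin


lemma dist_le: "(E ^^ n) u v \<Longrightarrow> dist E u v \<le> n"
  unfolding dist_def by (rule Least_le)

lemma dist_attain: "(E ^^ n) u v \<Longrightarrow> (E ^^ dist E u v) u v"
  unfolding dist_def by (rule LeastI)

lemma has_cycle_intro:
  assumes "successively E vs" "distinct vs" "3 \<le> length vs" "set vs \<subseteq> V" "E (last vs) (hd vs)"
  shows "has_cycle V E"
  unfolding has_cycle_def
proof (intro exI conjI allI impI)
  fix i assume i: "i < length vs"
  show "E (vs ! i) (vs ! ((i + 1) mod length vs))"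
  proof (cases "Suc i < length vs")
    case True then show ?thesis using successively_nth[OF assms(1) True] by simp
  next
    case False
    then have "i = length vs - 1" using i by simp
    moreover have "vs \<noteq> []" using assms(3) by auto
    ultimately show ?thesis using assms(5) i
      by (simp add: last_conv_nth hd_conv_nth)
  qed
qed (use assms in auto)

locale rtree =
  fixes V :: "'a set" and E :: "'a \<Rightarrow> 'a \<Rightarrow> bool" and v0 :: 'a
  assumes tr: "tree V E" and v0: "v0 \<in> V"
begin

abbreviation lev where "lev x \<equiv> dist E v0 x"

lemma fin: "finite V" and sym: "E u v \<Longrightarrow> E v u" and irr: "\<not> E v v"
  and inV: "E u v \<Longrightarrow> u \<in> V" "E u v \<Longrightarrow> v \<in> V"
  using tr unfolding tree_def graph_def by auto

lemma nocyc: "\<not> has_cycle V E" using tr unfolding tree_def by auto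

lemma reach: "x \<in> V \<Longrightarrow> (E ^^ lev x) v0 x"
proof -
  assume "x \<in> V"
  then have "E\<^sup>*\<^sup>* v0 x" using tr v0 unfolding tree_def connected_graph_def by auto
  then obtain n where "(E ^^ n) v0 x" using rtranclp_imp_relpowp by metis
  then show ?thesis by (rule dist_attain)
qed

lemma lev0_iff: "x \<in> V \<Longrightarrow> lev x = 0 \<longleftrightarrow> x = v0"
proof
  assume "x \<in> V" "lev x = 0"
  then show "x = v0" using reach[of x] by simp
next
  assume "x = v0"
  then show "lev x = 0" using dist_le[of 0 E v0 v0] by simp
qed

lemma l0: "lev v0 = 0" using lev0_iff[OF v0] by simp

lemma nv0: "lev x \<noteq> 0 \<Longrightarrow> x \<noteq> v0" by (metis l0)

lemma lev_edge: "E w x \<Longrightarrow> lev x \<le> lev w + 1"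
proof -
  assume e: "E w x"
  then have "(E ^^ Suc (lev w)) v0 x" using reach[of w] inV e by (auto intro: relpowp_Suc_I)
  then show ?thesis using dist_le by fastforce
qed

definition par where "par x = (SOME w. E w x \<and> lev w + 1 = lev x)"

lemma par_ex: assumes "x \<in> V" "x \<noteq> v0" shows "\<exists>w. E w x \<and> lev w + 1 = lev x"
proof -
  obtain m where m: "lev x = Suc m" using lev0_iff[OF assms(1)] assms(2) by (cases "lev x") auto
  have "(E ^^ Suc m) v0 x" using reach[OF assms(1)] m by simp
  then obtain w where w: "(E ^^ m) v0 w" "E w x" by (auto elim: relpowp_Suc_E)
  have "lev w \<le> m" using dist_le[OF w(1)] .
  moreover have "lev x \<le> lev w + 1" using lev_edge[OF w(2)] .
  ultimately show ?thesis using w m by (intro exI[of _ w]) auto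
qed

lemma par: assumes "x \<in> V" "x \<noteq> v0" shows "E (par x) x" "lev (par x) + 1 = lev x" "par x \<in> V"
proof -
  have "E (par x) x \<and> lev (par x) + 1 = lev x"
    unfolding par_def using someI_ex[OF par_ex[OF assms]] .
  then show "E (par x) x" "lev (par x) + 1 = lev x" "par x \<in> V" using inV by auto
qed

lemma paths: "x \<in> V \<Longrightarrow> y \<in> V \<Longrightarrow> x \<noteq> y \<Longrightarrow> lev x = k \<Longrightarrow> lev y = k \<Longrightarrow>
  \<exists>vs. successively E vs \<and> distinct vs \<and> hd vs = x \<and> last vs = y \<and> 3 \<le> length vs
     \<and> set vs \<subseteq> V \<and> (\<forall>z\<in>set vs. lev z \<le> k)"
proof (induction k arbitrary: x y)
  case 0
  then show ?case using lev0_iff[of x] lev0_iff[of y] by simp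
next
  case (Suc k)
  have nx: "x \<noteq> v0" and ny: "y \<noteq> v0" using Suc.prems(4,5) nv0 by simp_all
  note px = par[OF Suc.prems(1) nx] and py = par[OF Suc.prems(2) ny]
  show ?case
  proof (cases "par x = par y")
    case True
    have d1: "x \<noteq> par x" using px(2) by (metis Suc_eq_plus1 n_not_Suc_n)
    have d2: "y \<noteq> par y" using py(2) by (metis Suc_eq_plus1 n_not_Suc_n)
    have l1: "lev (par x) \<le> Suc k" using px(2) Suc.prems(4) by simp
    show ?thesis
    proof (rule exI[of _ "[x, par x, y]"], intro conjI)
      show "successively E [x, par x, y]" using sym[OF px(1)] py(1) True by simp
      show "distinct [x, par x, y]" using d1 d2 True Suc.prems(3) by auto
      show "set [x, par x, y] \<subseteq> V" using Suc.prems(1,2) px(3) by simp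
      show "\<forall>z\<in>set [x, par x, y]. lev z \<le> Suc k" using l1 Suc.prems(4,5) by simp
    qed simp_all
  next
    case False
    obtain Q where Q: "successively E Q" "distinct Q" "hd Q = par x" "last Q = par y" "3 \<le> length Q"
      "set Q \<subseteq> V" "\<forall>z\<in>set Q. lev z \<le> k"
      using Suc.IH[OF px(3) py(3) False] px py Suc.prems by auto
    have QnE: "Q \<noteq> []" using Q by auto
    have "x \<notin> set Q" "y \<notin> set Q" using Q(7) Suc.prems by fastforce+
    then show ?thesis
    proof (intro exI[of _ "[x] @ Q @ [y]"] conjI)
      show "successively E ([x] @ Q @ [y])" using Q(1,3,4) QnE sym[OF px(1)] py(1)
        unfolding successively_append_iff by simp
      show "distinct ([x] @ Q @ [y])" using Q(2) \<open>x \<notin> set Q\<close> \<open>y \<notin> set Q\<close> Suc.prems(3) by simp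
      show "set ([x] @ Q @ [y]) \<subseteq> V" using Q(6) Suc.prems(1,2) by simp
      show "\<forall>z\<in>set ([x] @ Q @ [y]). lev z \<le> Suc k" using Q(7) Suc.prems(4,5) by auto
      show "3 \<le> length ([x] @ Q @ [y])" using Q(5) by simp
    qed simp_all
  qed
qed

lemma no_same_level: assumes "E x y" shows "lev x \<noteq> lev y"
proof
  assume eq: "lev x = lev y"
  have "x \<noteq> y" using irr assms by auto
  obtain Q where Q: "successively E Q" "distinct Q" "hd Q = x" "last Q = y" "3 \<le> length Q"
      "set Q \<subseteq> V"
    using paths[OF inV(1)[OF assms] inV(2)[OF assms] \<open>x \<noteq> y\<close> refl eq[symmetric]] by blast
  have "has_cycle V E" by (rule has_cycle_intro[OF Q(1,2,5,6)]) (simp add: Q(3,4) sym[OF assms])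
  then show False using nocyc by simp
qed

lemma par_unique: assumes "x \<in> V" "E w x" "lev w + 1 = lev x" shows "w = par x"
proof (rule ccontr)
  assume ne: "w \<noteq> par x"
  have nx: "x \<noteq> v0" using assms(3) nv0 by auto
  note px = par[OF assms(1) nx]
  obtain Q where Q: "successively E Q" "distinct Q" "hd Q = w" "last Q = par x" "3 \<le> length Q"
      "set Q \<subseteq> V" "\<forall>z\<in>set Q. lev z \<le> lev w"
    using paths[of w "par x" "lev w"] inV assms px ne by auto
  have QnE: "Q \<noteq> []" using Q by auto
  have "x \<notin> set Q" using Q(7) assms by fastforce
  have "has_cycle V E"
  proof (rule has_cycle_intro)
    show "successively E (Q @ [x])" using Q(1,4) QnE px(1) by (simp add: successively_append_iff)
    show "distinct (Q @ [x])" using Q(2) \<open>x \<notin> set Q\<close> by simp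
    show "3 \<le> length (Q @ [x])" using Q(5) by simp
    show "set (Q @ [x]) \<subseteq> V" using Q(6) assms(1) by simp
    show "E (last (Q @ [x])) (hd (Q @ [x]))" using QnE Q(3) sym[OF assms(2)] by simp
  qed
  then show False using nocyc by simp
qed

lemma edge_iff: assumes "x \<in> V" "y \<in> V"
  shows "E x y \<longleftrightarrow> (y \<noteq> v0 \<and> x = par y) \<or> (x \<noteq> v0 \<and> y = par x)"
proof
  assume e: "E x y"
  have "lev y \<le> lev x + 1" "lev x \<le> lev y + 1" "lev x \<noteq> lev y"
    using lev_edge[OF e] lev_edge[OF sym[OF e]] no_same_level[OF e] by auto
  then consider "lev y = lev x + 1" | "lev x = lev y + 1" by linarith
  then show "(y \<noteq> v0 \<and> x = par y) \<or> (x \<noteq> v0 \<and> y = par x)"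
  proof cases
    case 1 then have "y \<noteq> v0" using nv0 by auto
    then show ?thesis using par_unique[OF assms(2) e] 1 by auto
  next
    case 2 then have "x \<noteq> v0" using nv0 by auto
    then show ?thesis using par_unique[OF assms(1) sym[OF e]] 2 by auto
  qed
next
  assume "(y \<noteq> v0 \<and> x = par y) \<or> (x \<noteq> v0 \<and> y = par x)"
  then show "E x y" using par assms sym by blast
qed

definition children where "children x = {y \<in> V. y \<noteq> v0 \<and> par y = x}"

lemma deg_eq: assumes "x \<in> V"
  shows "deg V E x = card (children x) + (if x = v0 then 0 else 1)"
proof -
  have nb: "{u \<in> V. E x u} = children x \<union> (if x = v0 then {} else {par x})"
    using edge_iff[OF assms] par assms unfolding children_def by auto
  have fc: "finite (children x)" using fin unfolding children_def by auto
  have "par x \<notin> children x" if nx: "x \<noteq> v0"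
  proof
    assume "par x \<in> children x"
    then have "par (par x) = x" "par x \<noteq> v0" "par x \<in> V" unfolding children_def by auto
    then have "lev x + 1 = lev (par x)" using par(2)[of "par x"] by simp
    then show False using par(2)[OF assms nx] by simp
  qed
  then show ?thesis unfolding deg_def nb using fc by auto
qed

end



locale canon =
  fixes d :: "nat list"
  assumes n1: "1 \<le> length d"
    and sumd: "(\<Sum>i<length d. d ! i) = 2 * (length d - 1)"
    and pos: "\<And>i. 1 \<le> i \<Longrightarrow> i < length d \<Longrightarrow> 1 \<le> d ! i"
    and desc: "\<And>i j. i \<le> j \<Longrightarrow> j < length d \<Longrightarrow> d ! j \<le> d ! i"
begin

abbreviation "N \<equiv> length d"

definition c where "c i = (if i = 0 then d ! 0 else d ! i - 1)"
definition S where "S m = (\<Sum>i<m. c i)"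
definition T where "T m = (\<Sum>i<m. d ! i)"

lemma S_mono: "a \<le> b \<Longrightarrow> S a \<le> S b"
  unfolding S_def by (rule sum_mono2) auto

lemma S_Suc: "S (Suc i) = S i + c i" unfolding S_def by simp

lemma ST: "1 \<le> j \<Longrightarrow> j \<le> N \<Longrightarrow> S j + j = T j + 1"
proof (induction j)
  case 0 then show ?case by simp
next
  case (Suc j)
  show ?case
  proof (cases "j = 0")
    case True then show ?thesis unfolding S_def T_def c_def by simp
  next
    case False
    then have "1 \<le> d ! j" using pos Suc.prems by simp
    moreover have "S j + j = T j + 1" using Suc False by simp
    ultimately show ?thesis unfolding S_Suc using False by (simp add: c_def T_def)
  qed
qed

lemma SN: "S N = N - 1"
  using ST[OF n1 order.refl] sumd n1 unfolding T_def by simp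

lemma prefix: assumes "1 \<le> j" "j < N" shows "j \<le> S j"
proof -
  have N2: "2 \<le> N" using assms by simp
  have "2 * j \<le> T j + 1"
  proof (cases "2 \<le> d ! (j - 1)")
    case True
    have "\<forall>i<j. 2 \<le> d ! i"
    proof (intro allI impI)
      fix i assume "i < j"
      then have "d ! (j - 1) \<le> d ! i" using desc[of i "j - 1"] assms by simp
      then show "2 \<le> d ! i" using True by simp
    qed
    then have "(\<Sum>i<j. 2) \<le> T j" unfolding T_def by (intro sum_mono) auto
    then show ?thesis by simp
  next
    case False
    have one: "d ! i = 1" if "j - 1 \<le> i" "i < N" for i
    proof -
      have "d ! i \<le> d ! (j - 1)" using desc that by simp
      moreover have "1 \<le> d ! i"
      proof (cases "i = 0")
        case True
        then have "1 \<le> d ! 1" using pos N2 by simp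
        moreover have "d ! 1 \<le> d ! 0" using desc N2 by simp
        ultimately show ?thesis using True by simp
      next
        case False then show ?thesis using pos that by simp
      qed
      ultimately show ?thesis using \<open>\<not> 2 \<le> d ! (j - 1)\<close> by simp
    qed
    have split: "T N = T j + (\<Sum>i\<in>{j..<N}. d ! i)"
    proof -
      have "(\<Sum>i<N. d ! i) = (\<Sum>i\<in>{0..<j}. d ! i) + (\<Sum>i\<in>{j..<N}. d ! i)"
        unfolding atLeast0LessThan[symmetric] using assms by (intro sum.atLeastLessThan_concat[symmetric]) auto
      then show ?thesis unfolding T_def atLeast0LessThan .
    qed
    have "(\<Sum>i\<in>{j..<N}. d ! i) = (\<Sum>i\<in>{j..<N}. 1)" using one by (intro sum.cong) auto
    then have "T N = T j + (N - j)" using split by simp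
    moreover have "T N = 2 * (N - 1)" using sumd unfolding T_def .
    ultimately show ?thesis using assms by linarith
  qed
  then show ?thesis using ST[of j] assms by simp
qed

definition P where "P j = (LEAST i. j \<le> S (Suc i))"

lemma P_le_iff: assumes "1 \<le> j" "j < N" shows "P j \<le> i \<longleftrightarrow> j \<le> S (Suc i)"
proof
  have "Suc (N - 1) = N" using assms by simp
  then have ex: "j \<le> S (Suc (N - 1))" using SN assms by simp
  assume "P j \<le> i"
  have "j \<le> S (Suc (P j))" unfolding P_def by (rule LeastI[of "\<lambda>i. j \<le> S (Suc i)", OF ex])
  also have "\<dots> \<le> S (Suc i)" using S_mono \<open>P j \<le> i\<close> by simp
  finally show "j \<le> S (Suc i)" .
next
  assume "j \<le> S (Suc i)"
  then show "P j \<le> i" unfolding P_def by (rule Least_le)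
qed

lemma P_lt: assumes "1 \<le> j" "j < N" shows "P j < j"
proof -
  have "j \<le> S (Suc (j - 1))" using prefix[OF assms] assms by simp
  then have "P j \<le> j - 1" using P_le_iff[OF assms] by blast
  then show ?thesis using assms by simp
qed

lemma P_mono: assumes "1 \<le> j" "j \<le> j'" "j' < N" shows "P j \<le> P j'"
proof -
  have "j' \<le> S (Suc (P j'))" using P_le_iff[of j' "P j'"] assms by simp
  then show ?thesis using P_le_iff[of j "P j'"] assms by simp
qed

lemma P_eq_iff: assumes "1 \<le> j" "j < N" shows "P j = i \<longleftrightarrow> S i < j \<and> j \<le> S (Suc i)"
proof (cases i)
  case 0
  then show ?thesis using P_le_iff[OF assms, of 0] assms by (auto simp: S_def)
next
  case (Suc i')
  have "P j = i \<longleftrightarrow> P j \<le> i \<and> \<not> P j \<le> i'" using Suc by auto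
  then show ?thesis using P_le_iff[OF assms, of i] P_le_iff[OF assms, of i'] Suc by auto
qed

lemma fiber: assumes "i < N" shows "card {j \<in> {1..<N}. P j = i} = c i"
proof -
  have "S (Suc i) \<le> S N" using S_mono assms by simp
  then have le: "S (Suc i) < N" using SN n1 by simp
  have "{j \<in> {1..<N}. P j = i} = {S i<..S (Suc i)}"
  proof (intro set_eqI iffI)
    fix j assume "j \<in> {j \<in> {1..<N}. P j = i}"
    then show "j \<in> {S i<..S (Suc i)}" using P_eq_iff by auto
  next
    fix j assume j: "j \<in> {S i<..S (Suc i)}"
    then have "1 \<le> j" "j < N" using le by auto
    then show "j \<in> {j \<in> {1..<N}. P j = i}" using P_eq_iff j by auto
  qed
  then show ?thesis using S_Suc by simp
qed

end



context canon begin

definition Vc where "Vc = {..<N}"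
definition Ec where "Ec j k = (j < N \<and> k < N \<and> ((k \<noteq> 0 \<and> j = P k) \<or> (j \<noteq> 0 \<and> k = P j)))"

lemma Ec_sym: "Ec j k \<Longrightarrow> Ec k j" unfolding Ec_def by auto

lemma Ec_irr: "\<not> Ec k k"
proof
  assume "Ec k k"
  then have "k \<noteq> 0" "k = P k" "k < N" unfolding Ec_def by auto
  then show False using P_lt[of k] by simp
qed

lemma graph_c: "graph Vc Ec"
  unfolding graph_def Vc_def using Ec_sym Ec_irr by (auto simp: Ec_def)

lemma Ec_par: "1 \<le> k \<Longrightarrow> k < N \<Longrightarrow> Ec (P k) k"
  unfolding Ec_def using P_lt[of k] by auto

lemma reach0: "k < N \<Longrightarrow> Ec\<^sup>*\<^sup>* 0 k \<and> Ec\<^sup>*\<^sup>* k 0"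
proof (induction k rule: less_induct)
  case (less k)
  show ?case
  proof (cases "k = 0")
    case True then show ?thesis by simp
  next
    case False
    then have k1: "1 \<le> k" by simp
    have "P k < k" using P_lt[OF k1 less.prems] .
    then have ih: "Ec\<^sup>*\<^sup>* 0 (P k) \<and> Ec\<^sup>*\<^sup>* (P k) 0" using less by simp
    have e: "Ec (P k) k" "Ec k (P k)" using Ec_par[OF k1 less.prems] Ec_sym by auto
    show ?thesis using ih e by (meson rtranclp.rtrancl_into_rtrancl converse_rtranclp_into_rtranclp)
  qed
qed

lemma conn_c: "connected_graph Vc Ec"
  unfolding connected_graph_def Vc_def using reach0 by (meson lessThan_iff rtranclp_trans)

lemma nbr_lt: assumes "Ec j m" "j < m" shows "j = P m"
proof -
  have "\<not> (j \<noteq> 0 \<and> m = P j)"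
  proof
    assume "j \<noteq> 0 \<and> m = P j"
    then have "P j < j" using P_lt[of j] assms unfolding Ec_def by auto
    then show False using assms \<open>j \<noteq> 0 \<and> m = P j\<close> by simp
  qed
  then show ?thesis using assms unfolding Ec_def by auto
qed

lemma acyc_c: "\<not> has_cycle Vc Ec"
proof
  assume "has_cycle Vc Ec"
  then obtain vs where L3: "3 \<le> length vs" and dv: "distinct vs" and sv: "set vs \<subseteq> Vc"
    and cyc: "\<And>i. i < length vs \<Longrightarrow> Ec (vs ! i) (vs ! ((i + 1) mod length vs))"
    unfolding has_cycle_def by blast
  define L where "L = length vs"
  define m where "m = Max (set vs)"
  have "vs \<noteq> []" using L3 by auto
  then have "m \<in> set vs" unfolding m_def by simp
  then obtain p where p: "p < L" "vs ! p = m" unfolding L_def by (metis in_set_conv_nth)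
  have le: "\<And>i. i < L \<Longrightarrow> vs ! i \<le> m" unfolding m_def L_def by simp
  define a where "a = (if p = 0 then L - 1 else p - 1)"
  define b where "b = (if p = L - 1 then 0 else p + 1)"
  have hL: "Suc (L - 1) = L" using L3 unfolding L_def by simp
  have a: "a < L" "(a + 1) mod L = p" "a \<noteq> p" using p L3 hL unfolding a_def L_def by auto
  have b: "b < L" "(p + 1) mod L = b" "b \<noteq> p" using p L3 hL unfolding b_def L_def by auto
  have ab: "a \<noteq> b" using p L3 unfolding a_def b_def L_def by auto
  have ea: "Ec (vs ! a) m" using cyc[of a] a p unfolding L_def by simp
  have eb: "Ec (vs ! b) m" using Ec_sym cyc[of p] b p unfolding L_def by simp
  have "vs ! a \<noteq> m" using dv a p unfolding L_def by (metis nth_eq_iff_index_eq)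
  then have "vs ! a = P m" using nbr_lt[OF ea] le[OF a(1)] by simp
  moreover have "vs ! b \<noteq> m" using dv b p unfolding L_def by (metis nth_eq_iff_index_eq)
  then have "vs ! b = P m" using nbr_lt[OF eb] le[OF b(1)] by simp
  ultimately have "vs ! a = vs ! b" by simp
  then show False using dv a(1) b(1) ab unfolding L_def by (simp add: nth_eq_iff_index_eq)
qed

lemma tree_c: "tree Vc Ec"
proof -
  have "0 \<in> Vc" using n1 unfolding Vc_def by (simp add: Suc_le_eq)
  then have "Vc \<noteq> {}" by blast
  then show ?thesis unfolding tree_def using graph_c conn_c acyc_c by auto
qed

lemma deg_c: assumes "k < N" shows "deg Vc Ec k = d ! k"
proof -
  have nb: "{u \<in> Vc. Ec k u} = {j \<in> {1..<N}. P j = k} \<union> (if k = 0 then {} else {P k})"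
  proof (cases "k = 0")
    case True then show ?thesis unfolding Vc_def Ec_def using assms by auto
  next
    case False
    then have "P k < k" using P_lt[of k] assms by simp
    then show ?thesis unfolding Vc_def Ec_def using assms False by auto
  qed
  have disj: "k \<noteq> 0 \<Longrightarrow> P k \<notin> {j \<in> {1..<N}. P j = k}"
  proof
    assume "k \<noteq> 0" "P k \<in> {j \<in> {1..<N}. P j = k}"
    then have "P (P k) = k" "1 \<le> P k" "P k < k" using P_lt[of k] assms by auto
    then show False using P_lt[of "P k"] assms by simp
  qed
  have "deg Vc Ec k = c k + (if k = 0 then 0 else 1)"
    unfolding deg_def nb using fiber[OF assms] disj by auto
  then show ?thesis unfolding c_def using pos[of k] assms by auto
qed

lemma degseq_c: "degree_sequence Vc Ec = mset d"
proof -
  have "degree_sequence Vc Ec = mset (map (deg Vc Ec) [0..<N])"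
    unfolding degree_sequence_def Vc_def
    by (metis atLeast_upt distinct_upt mset_map mset_set_set)
  also have "map (deg Vc Ec) [0..<N] = map (nth d) [0..<N]" using deg_c by simp
  also have "\<dots> = d" by (rule map_nth)
  finally show ?thesis .
qed

end



context rtree begin

lemma sum_deg: "(\<Sum>x\<in>V. deg V E x) = 2 * (card V - 1)"
proof -
  have "(\<Sum>x\<in>V. deg V E x) = (\<Sum>x\<in>V. card (children x)) + (\<Sum>x\<in>V. (if x = v0 then 0 else 1))"
    using deg_eq by (simp add: sum.distrib)
  also have "(\<Sum>x\<in>V. card (children x)) = card (\<Union>x\<in>V. children x)"
    by (rule card_UN_disjoint[symmetric]) (use fin in \<open>auto simp: children_def\<close>)
  also have "(\<Union>x\<in>V. children x) = V - {v0}"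
  proof
    show "(\<Union>x\<in>V. children x) \<subseteq> V - {v0}" unfolding children_def by auto
    show "V - {v0} \<subseteq> (\<Union>x\<in>V. children x)"
    proof
      fix y assume "y \<in> V - {v0}"
      then have "y \<in> children (par y)" "par y \<in> V" unfolding children_def using par(3) by auto
      then show "y \<in> (\<Union>x\<in>V. children x)" by blast
    qed
  qed
  also have "(\<Sum>x\<in>V. (if x = v0 then 0 else 1::nat)) = card (V - {v0})"
  proof -
    have "(\<Sum>x\<in>V. (if x = v0 then 0 else 1::nat)) = (\<Sum>x\<in>V - {v0}. (if x = v0 then 0 else 1::nat))"
      using sum.remove[OF fin v0, of "\<lambda>x. if x = v0 then 0 else 1::nat"] by simp
    also have "\<dots> = (\<Sum>x\<in>V - {v0}. 1)" by (rule sum.cong) auto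
    finally show ?thesis by simp
  qed
  finally show ?thesis using card_Diff_singleton[OF v0] fin by simp
qed

end

lemma tree_facts:
  assumes "tree V E"
  shows "size (degree_sequence V E) = card V" "sum_mset (degree_sequence V E) = 2 * (card V - 1)"
    "1 \<le> card V"
proof -
  have fin: "finite V" and ne: "V \<noteq> {}" using assms unfolding tree_def graph_def by auto
  then obtain v0 where v0: "v0 \<in> V" by blast
  interpret rtree V E v0 using assms v0 by unfold_locales
  show "size (degree_sequence V E) = card V" unfolding degree_sequence_def by simp
  show "sum_mset (degree_sequence V E) = 2 * (card V - 1)"
    unfolding degree_sequence_def using sum_deg sum_unfold_sum_mset by metis
  show "1 \<le> card V" using fin ne by (simp add: Suc_le_eq card_gt_0_iff)
qed

lemma tree_pos:
  assumes "tree V E" "2 \<le> card V" "k \<in># degree_sequence V E"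
  shows "1 \<le> k"
proof -
  have fin: "finite V" using assms unfolding tree_def graph_def by auto
  obtain x where x: "x \<in> V" "k = deg V E x"
    using assms(3) fin unfolding degree_sequence_def by auto
  have "card (V - {x}) \<ge> 1" using assms(2) x fin by (simp add: card_Diff_singleton)
  then have "V - {x} \<noteq> {}" by (metis card.empty not_one_le_zero)
  then obtain v0 where hv0: "v0 \<in> V" "v0 \<noteq> x" by blast
  interpret rtree V E v0 using assms(1) hv0 by unfold_locales
  show ?thesis using deg_eq[OF x(1)] x hv0(2) by simp
qed

context canon begin

lemma zero_Vc: "0 \<in> Vc" using n1 unfolding Vc_def by (simp add: Suc_le_eq)

sublocale R: rtree Vc Ec 0 using tree_c zero_Vc by unfold_locales

lemma parP: "1 \<le> k \<Longrightarrow> k < N \<Longrightarrow> R.par k = P k"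
proof (induction k rule: less_induct)
  case (less k)
  have k: "k \<in> Vc" "P k \<in> Vc" using less.prems P_lt[OF less.prems] unfolding Vc_def by auto
  have "Ec (P k) k" using Ec_par[OF less.prems] .
  then have "(k \<noteq> 0 \<and> P k = R.par k) \<or> (P k \<noteq> 0 \<and> k = R.par (P k))"
    using R.edge_iff[OF k(2) k(1)] by simp
  moreover have "\<not> (P k \<noteq> 0 \<and> k = R.par (P k))"
  proof
    assume a: "P k \<noteq> 0 \<and> k = R.par (P k)"
    have pl: "P k < k" using P_lt[OF less.prems] .
    then have "R.par (P k) = P (P k)" using less.IH[of "P k"] a less.prems by simp
    then have "k = P (P k)" using a by simp
    moreover have "P (P k) < P k" using P_lt[of "P k"] a pl less.prems by simp
    ultimately show False using pl by simp
  qed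
  ultimately show ?case by metis
qed

lemma levP: "1 \<le> k \<Longrightarrow> k < N \<Longrightarrow> R.lev k = R.lev (P k) + 1"
proof -
  assume k: "1 \<le> k" "k < N"
  have "k \<in> Vc" "k \<noteq> 0" using k unfolding Vc_def by auto
  then show ?thesis using R.par(2)[of k] parP[OF k] by simp
qed

lemma lev_mono: "a < b \<Longrightarrow> b < N \<Longrightarrow> R.lev a \<le> R.lev b"
proof (induction b arbitrary: a rule: less_induct)
  case (less b)
  show ?case
  proof (cases "a = 0")
    case True then show ?thesis using R.l0 by simp
  next
    case False
    then have a1: "1 \<le> a" by simp
    have b1: "1 \<le> b" using less.prems by simp
    have pm: "P a \<le> P b" using P_mono[of a b] a1 less.prems by simp
    have "R.lev (P a) \<le> R.lev (P b)"
    proof (cases "P a = P b")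
      case True then show ?thesis by simp
    next
      case False
      then have "P a < P b" using pm by simp
      moreover have "P b < b" using P_lt[OF b1 less.prems(2)] .
      ultimately show ?thesis using less.IH[of "P b" "P a"] less.prems by simp
    qed
    then show ?thesis using levP[OF a1] levP[OF b1 less.prems(2)] less.prems by simp
  qed
qed

lemma child_c: assumes "child Ec 0 w v" shows "1 \<le> v" "v < N" "w = P v"
proof -
  have e: "Ec w v" and l: "R.lev v = R.lev w + 1" using assms unfolding child_def by auto
  have v: "v \<in> Vc" using R.inV(2)[OF e] .
  have "v \<noteq> 0" using l R.l0 by (metis Suc_eq_plus1 nat.distinct(1))
  then show "1 \<le> v" by simp
  show "v < N" using v unfolding Vc_def by simp
  have "w = R.par v" using R.par_unique[OF v e] l by simp
  then show "w = P v" using parP \<open>v \<noteq> 0\<close> v unfolding Vc_def by simp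
qed

lemma prec_upt: "prec [0..<N] a b \<longleftrightarrow> a < b \<and> b < N"
  unfolding prec_def
proof
  assume "\<exists>i j. i < j \<and> j < length [0..<N] \<and> [0..<N] ! i = a \<and> [0..<N] ! j = b"
  then show "a < b \<and> b < N" by auto
next
  assume "a < b \<and> b < N"
  then show "\<exists>i j. i < j \<and> j < length [0..<N] \<and> [0..<N] ! i = a \<and> [0..<N] ! j = b"
    by (intro exI[of _ a] exI[of _ b]) simp
qed

lemma bfd_c: "BFD_ordering Vc Ec 0 [0..<N]"
  unfolding BFD_ordering_def
proof (intro conjI allI impI)
  show "distinct [0..<N]" by simp
  show "set [0..<N] = Vc" unfolding Vc_def by auto
  show "0 \<in> Vc" using zero_Vc .
  show "[0..<N] ! 0 = 0" using n1 by (simp add: Suc_le_eq)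
  fix a b assume "prec [0..<N] a b"
  then show "R.lev a \<le> R.lev b" using lev_mono prec_upt by simp
next
  fix w1 w2 v1 v2 assume p: "prec [0..<N] w1 w2" and c1: "child Ec 0 w1 v1" and c2: "child Ec 0 w2 v2"
  note a = child_c[OF c1] and b = child_c[OF c2]
  have "P v1 < P v2" using p a(3) b(3) prec_upt by simp
  then have "v1 < v2" using P_mono[of v2 v1] a b by (metis not_le)
  then show "prec [0..<N] v1 v2" using b(2) prec_upt by simp
next
  fix v u assume "prec [0..<N] v u"
  then have "v < u" "u < N" using prec_upt by auto
  then show "deg Vc Ec u \<le> deg Vc Ec v" using deg_c desc by simp
qed

end



lemma prec_nth: "distinct xs \<Longrightarrow> i < length xs \<Longrightarrow> j < length xs \<Longrightarrow>
  prec xs (xs ! i) (xs ! j) \<longleftrightarrow> i < j"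
  unfolding prec_def by (metis nth_eq_iff_index_eq order.strict_trans)

locale bfd = rtree +
  fixes xs :: "'a list"
  assumes ord: "BFD_ordering V E v0 xs"
begin

lemma dxs: "distinct xs" and sxs: "set xs = V" and x0: "xs ! 0 = v0"
  and levmono: "prec xs a b \<Longrightarrow> lev a \<le> lev b"
  and B1: "prec xs w1 w2 \<Longrightarrow> child E v0 w1 v1 \<Longrightarrow> child E v0 w2 v2 \<Longrightarrow> prec xs v1 v2"
  and B2: "prec xs v u \<Longrightarrow> deg V E u \<le> deg V E v"
  using ord unfolding BFD_ordering_def by auto

abbreviation "n \<equiv> length xs"

lemma n_card: "n = card V" using dxs sxs distinct_card by fastforce

lemma nth_in: "i < n \<Longrightarrow> xs ! i \<in> V" using sxs nth_mem by blast

definition idx where "idx x = (THE i. i < n \<and> xs ! i = x)"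

lemma idx: assumes "x \<in> V" shows "idx x < n" "xs ! idx x = x"
proof -
  have "\<exists>!i. i < n \<and> xs ! i = x" using distinct_Ex1[OF dxs] assms sxs by auto
  then have "idx x < n \<and> xs ! idx x = x" unfolding idx_def by (rule theI')
  then show "idx x < n" "xs ! idx x = x" by auto
qed

lemma idx_nth: "i < n \<Longrightarrow> idx (xs ! i) = i"
  using idx[OF nth_in] dxs nth_eq_iff_index_eq by metis

lemma nth_inj: "i < n \<Longrightarrow> j < n \<Longrightarrow> xs ! i = xs ! j \<longleftrightarrow> i = j"
  using dxs nth_eq_iff_index_eq by metis

lemma nth0_iff: "i < n \<Longrightarrow> xs ! i = v0 \<longleftrightarrow> i = 0"
proof -
  assume i: "i < n"
  have "0 < n" using i by linarith
  then show ?thesis using nth_inj[OF i, of 0] x0 by auto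
qed

definition P where "P j = idx (par (xs ! j))"

lemma P_par: assumes "1 \<le> j" "j < n"
  shows "P j < n" "xs ! P j = par (xs ! j)" "xs ! j \<noteq> v0"
proof -
  show nv: "xs ! j \<noteq> v0" using nth0_iff assms by simp
  have "par (xs ! j) \<in> V" using par(3)[OF nth_in[OF assms(2)] nv] .
  then show "P j < n" "xs ! P j = par (xs ! j)" unfolding P_def using idx by auto
qed

lemma P_lt: assumes "1 \<le> j" "j < n" shows "P j < j"
proof (rule ccontr)
  assume "\<not> P j < j"
  note pp = P_par[OF assms]
  have l: "lev (xs ! P j) + 1 = lev (xs ! j)"
    using pp par(2)[OF nth_in[OF assms(2)] pp(3)] by simp
  then have "P j \<noteq> j" by auto
  with \<open>\<not> P j < j\<close> have "j < P j" by simp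
  then have "prec xs (xs ! j) (xs ! P j)" using prec_nth[OF dxs assms(2) pp(1)] by simp
  then have "lev (xs ! j) \<le> lev (xs ! P j)" by (rule levmono)
  then show False using l by simp
qed

lemma child_par: assumes "1 \<le> j" "j < n" shows "child E v0 (xs ! P j) (xs ! j)"
  using P_par[OF assms] par[OF nth_in[OF assms(2)]] unfolding child_def by simp

lemma P_mono: assumes "1 \<le> j" "j \<le> j'" "j' < n" shows "P j \<le> P j'"
proof (rule ccontr)
  assume "\<not> P j \<le> P j'"
  then have "P j' < P j" by simp
  have j: "1 \<le> j" "j < n" and j': "1 \<le> j'" "j' < n" using assms by auto
  have "prec xs (xs ! P j') (xs ! P j)"
    using prec_nth[OF dxs P_par(1)[OF j'] P_par(1)[OF j]] \<open>P j' < P j\<close> by simp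
  then have "prec xs (xs ! j') (xs ! j)" using B1 child_par[OF j'] child_par[OF j] by blast
  then have "j' < j" using prec_nth[OF dxs j'(2) j(2)] by simp
  then show False using assms by simp
qed

lemma fiber: assumes "i < n"
  shows "card {j \<in> {1..<n}. P j = i} = card (children (xs ! i))"
proof -
  have inj: "inj_on (nth xs) {j \<in> {1..<n}. P j = i}" using inj_on_nth[OF dxs] by auto
  have "nth xs ` {j \<in> {1..<n}. P j = i} = children (xs ! i)"
  proof
    show "nth xs ` {j \<in> {1..<n}. P j = i} \<subseteq> children (xs ! i)"
    proof
      fix y assume "y \<in> nth xs ` {j \<in> {1..<n}. P j = i}"
      then obtain j where j: "1 \<le> j" "j < n" "P j = i" "y = xs ! j" by auto
      show "y \<in> children (xs ! i)" unfolding children_def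
        using P_par[OF j(1,2)] j nth_in by auto
    qed
  next
    show "children (xs ! i) \<subseteq> nth xs ` {j \<in> {1..<n}. P j = i}"
    proof
      fix y assume "y \<in> children (xs ! i)"
      then have y: "y \<in> V" "y \<noteq> v0" "par y = xs ! i" unfolding children_def by auto
      define j where "j = idx y"
      have j: "j < n" "xs ! j = y" using idx[OF y(1)] j_def by auto
      have "j \<noteq> 0" using j y(2) x0 by metis
      then have j1: "1 \<le> j" by simp
      have "xs ! P j = xs ! i" using P_par(2)[OF j1 j(1)] j y(3) by simp
      then have "P j = i" using nth_inj[OF P_par(1)[OF j1 j(1)] assms] by simp
      then show "y \<in> nth xs ` {j \<in> {1..<n}. P j = i}" using j j1 by force
    qed
  qed
  then show ?thesis using card_image[OF inj] by simp
qed

lemma deg_nth: assumes "i < n"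
  shows "deg V E (xs ! i) = card {j \<in> {1..<n}. P j = i} + (if i = 0 then 0 else 1)"
  using deg_eq[OF nth_in[OF assms]] fiber[OF assms] nth0_iff[OF assms] by simp

lemma edge_nth: assumes "i < n" "j < n"
  shows "E (xs ! i) (xs ! j) \<longleftrightarrow> (j \<noteq> 0 \<and> i = P j) \<or> (i \<noteq> 0 \<and> j = P i)"
proof -
  have a: "(xs ! j \<noteq> v0 \<and> xs ! i = par (xs ! j)) \<longleftrightarrow> (j \<noteq> 0 \<and> i = P j)"
  proof (cases "j = 0")
    case True then show ?thesis using x0 by simp
  next
    case False
    then have j1: "1 \<le> j" by simp
    show ?thesis using P_par[OF j1 assms(2)] nth_inj[OF assms(1) P_par(1)[OF j1 assms(2)]] False
      by metis
  qed
  have b: "(xs ! i \<noteq> v0 \<and> xs ! j = par (xs ! i)) \<longleftrightarrow> (i \<noteq> 0 \<and> j = P i)"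
  proof (cases "i = 0")
    case True then show ?thesis using x0 by simp
  next
    case False
    then have i1: "1 \<le> i" by simp
    show ?thesis using P_par[OF i1 assms(1)] nth_inj[OF assms(2) P_par(1)[OF i1 assms(1)]] False
      by metis
  qed
  show ?thesis using edge_iff[OF nth_in[OF assms(1)] nth_in[OF assms(2)]] a b by blast
qed

lemma degseq: "degree_sequence V E = mset (map (deg V E) xs)"
  unfolding degree_sequence_def using sxs mset_set_set[OF dxs] by (metis mset_map)

lemma deg_sorted: "sorted (rev (map (deg V E) xs))"
  unfolding sorted_iff_nth_mono
proof (intro allI impI)
  fix i j assume ij0: "i \<le> j" "j < length (rev (map (deg V E) xs))"
  then have ij: "i \<le> j \<and> j < length (rev (map (deg V E) xs))" by simp
  then have lt: "n - 1 - j \<le> n - 1 - i" "n - 1 - i < n" "n - 1 - j < n" by auto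
  have "deg V E (xs ! (n - 1 - i)) \<le> deg V E (xs ! (n - 1 - j))"
  proof (cases "n - 1 - j = n - 1 - i")
    case True then show ?thesis by simp
  next
    case False
    then have "prec xs (xs ! (n - 1 - j)) (xs ! (n - 1 - i))"
      using prec_nth[OF dxs lt(3) lt(2)] lt(1) by simp
    then show ?thesis by (rule B2)
  qed
  then show "rev (map (deg V E) xs) ! i \<le> rev (map (deg V E) xs) ! j"
    using ij lt by (simp add: rev_nth)
qed

end



lemma fib_sum: "finite S \<Longrightarrow> card {j\<in>S. P j \<le> (a::nat)} = (\<Sum>i\<le>a. card {j\<in>S. P j = i})"
proof (induction a)
  case 0 then show ?case by simp
next
  case (Suc a)
  have "{j\<in>S. P j \<le> Suc a} = {j\<in>S. P j \<le> a} \<union> {j\<in>S. P j = Suc a}" by auto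
  moreover have "card ({j\<in>S. P j \<le> a} \<union> {j\<in>S. P j = Suc a}) =
     card {j\<in>S. P j \<le> a} + card {j\<in>S. P j = Suc a}"
    using Suc.prems by (intro card_Un_disjoint) auto
  ultimately show ?case using Suc by simp
qed

lemma not_lt:
  fixes P Q :: "nat \<Rightarrow> nat"
  assumes monoQ: "\<And>j j'. 1 \<le> j \<Longrightarrow> j \<le> j' \<Longrightarrow> j' < n \<Longrightarrow> Q j \<le> Q j'"
    and fib: "\<And>i. card {j \<in> {1..<n}. P j = i} = card {j \<in> {1..<n}. Q j = i}"
    and IH: "\<And>j'. 1 \<le> j' \<Longrightarrow> j' < j \<Longrightarrow> P j' = Q j'"
    and j: "1 \<le> j" "j < n"
  shows "\<not> P j < Q j"
proof
  assume lt: "P j < Q j"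
  define a where "a = P j"
  define AP where "AP = {j'\<in>{1..<n}. P j' \<le> a}"
  define AQ where "AQ = {j'\<in>{1..<n}. Q j' \<le> a}"
  have "card AP = card AQ" unfolding AP_def AQ_def
    using fib_sum[of "{1..<n}" P a] fib_sum[of "{1..<n}" Q a] fib by simp
  moreover have "AQ \<subseteq> {j'\<in>{1..<n}. j' < j \<and> P j' \<le> a}"
  proof
    fix j' assume "j' \<in> AQ"
    then have j': "1 \<le> j'" "j' < n" "Q j' \<le> a" unfolding AQ_def by auto
    have "j' < j"
    proof (rule ccontr)
      assume "\<not> j' < j"
      then have "Q j \<le> Q j'" using monoQ[OF j(1) _ j'(2)] by simp
      then show False using j' lt a_def by simp
    qed
    then show "j' \<in> {j'\<in>{1..<n}. j' < j \<and> P j' \<le> a}" using IH[OF j'(1)] j' by auto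
  qed
  moreover have "{j'\<in>{1..<n}. j' < j \<and> P j' \<le> a} \<subset> AP"
    unfolding AP_def a_def using j by auto
  ultimately have "card AQ < card AP"
  proof -
    assume s1: "AQ \<subseteq> {j'\<in>{1..<n}. j' < j \<and> P j' \<le> a}" and s2: "{j'\<in>{1..<n}. j' < j \<and> P j' \<le> a} \<subset> AP"
    have "card AQ \<le> card {j'\<in>{1..<n}. j' < j \<and> P j' \<le> a}" by (rule card_mono[OF _ s1]) simp
    also have "\<dots> < card AP" by (rule psubset_card_mono[OF _ s2]) (simp add: AP_def)
    finally show ?thesis .
  qed
  then show False using \<open>card AP = card AQ\<close> by simp
qed

lemma fun_unique:
  fixes P Q :: "nat \<Rightarrow> nat"
  assumes monoP: "\<And>j j'. 1 \<le> j \<Longrightarrow> j \<le> j' \<Longrightarrow> j' < n \<Longrightarrow> P j \<le> P j'"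
    and monoQ: "\<And>j j'. 1 \<le> j \<Longrightarrow> j \<le> j' \<Longrightarrow> j' < n \<Longrightarrow> Q j \<le> Q j'"
    and fib: "\<And>i. card {j \<in> {1..<n}. P j = i} = card {j \<in> {1..<n}. Q j = i}"
  shows "1 \<le> j \<Longrightarrow> j < n \<Longrightarrow> P j = Q j"
proof (induction j rule: less_induct)
  case (less j)
  have IH: "\<And>j'. 1 \<le> j' \<Longrightarrow> j' < j \<Longrightarrow> P j' = Q j'" using less by auto
  have "\<not> P j < Q j" using not_lt[OF monoQ fib IH less.prems] by blast
  moreover have "\<not> Q j < P j" using not_lt[of n P Q j, OF monoP fib[symmetric]] IH less.prems by metis
  ultimately show ?case by simp
qed

lemma iso_via:
  assumes "bij_betw h A V1" "bij_betw g A V2"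
    and "\<And>i j. i \<in> A \<Longrightarrow> j \<in> A \<Longrightarrow> E1 (h i) (h j) \<longleftrightarrow> E2 (g i) (g j)"
  shows "isomorphic V1 E1 V2 E2"
  unfolding isomorphic_def
proof (intro exI conjI ballI)
  show "bij_betw (g \<circ> inv_into A h) V1 V2"
    using bij_betw_trans[OF bij_betw_inv_into[OF assms(1)] assms(2)] .
  fix u v assume u: "u \<in> V1" and v: "v \<in> V1"
  have hu: "h (inv_into A h u) = u" "inv_into A h u \<in> A" using assms(1) u
    by (auto simp: bij_betw_def f_inv_into_f inv_into_into)
  have hv: "h (inv_into A h v) = v" "inv_into A h v \<in> A" using assms(1) v
    by (auto simp: bij_betw_def f_inv_into_f inv_into_into)
  show "E1 u v \<longleftrightarrow> E2 ((g \<circ> inv_into A h) u) ((g \<circ> inv_into A h) v)"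
    using assms(3)[OF hu(2) hv(2)] hu(1) hv(1) by simp
qed

lemma sorted_rev_eq:
  assumes "sorted (rev L1)" "sorted (rev L2)" "mset L1 = mset L2"
  shows "L1 = L2"
proof -
  have "sort (rev L2) = rev L1" using properties_for_sort[of "rev L1" "rev L2"] assms by simp
  moreover have "sort (rev L2) = rev L2" using sorted_sort_id[OF assms(2)] .
  ultimately show ?thesis by simp
qed

theorem bfd_iso:
  fixes V1 :: "'a set" and V2 :: "'b set"
  assumes t1: "tree V1 E1" and o1: "BFD_ordering V1 E1 v1 xs1"
    and t2: "tree V2 E2" and o2: "BFD_ordering V2 E2 v2 xs2"
    and ds: "degree_sequence V1 E1 = degree_sequence V2 E2"
  shows "isomorphic V1 E1 V2 E2"
proof -
  have v1: "v1 \<in> V1" and v2: "v2 \<in> V2" using o1 o2 unfolding BFD_ordering_def by auto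
  interpret A: bfd V1 E1 v1 xs1 using t1 v1 o1 by unfold_locales
  interpret B: bfd V2 E2 v2 xs2 using t2 v2 o2 by unfold_locales
  have ms: "mset (map (deg V1 E1) xs1) = mset (map (deg V2 E2) xs2)"
    using ds A.degseq B.degseq by simp
  have len: "length xs1 = length xs2" using arg_cong[OF ms, of size] by simp
  have degs: "map (deg V1 E1) xs1 = map (deg V2 E2) xs2"
    using sorted_rev_eq[OF A.deg_sorted B.deg_sorted ms] .
  define n where "n = length xs1"
  have degi: "i < n \<Longrightarrow> deg V1 E1 (xs1 ! i) = deg V2 E2 (xs2 ! i)" for i
    using arg_cong[OF degs, of "\<lambda>l. l ! i"] len n_def by simp
  have fib: "card {j \<in> {1..<n}. A.P j = i} = card {j \<in> {1..<n}. B.P j = i}" for i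
  proof (cases "i < n")
    case True
    then show ?thesis using A.deg_nth[of i] B.deg_nth[of i] degi[OF True] len n_def by simp
  next
    case False
    have "{j \<in> {1..<n}. A.P j = i} = {}" using A.P_lt n_def False by fastforce
    moreover have "{j \<in> {1..<n}. B.P j = i} = {}" using B.P_lt n_def len False by fastforce
    ultimately show ?thesis by (simp only:)
  qed
  have Peq: "1 \<le> j \<Longrightarrow> j < n \<Longrightarrow> A.P j = B.P j" for j
  proof -
    have mA: "\<And>j j'. 1 \<le> j \<Longrightarrow> j \<le> j' \<Longrightarrow> j' < n \<Longrightarrow> A.P j \<le> A.P j'"
      using A.P_mono n_def by simp
    have mB: "\<And>j j'. 1 \<le> j \<Longrightarrow> j \<le> j' \<Longrightarrow> j' < n \<Longrightarrow> B.P j \<le> B.P j'"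
      using B.P_mono n_def len by simp
    assume "1 \<le> j" "j < n"
    then show ?thesis using fun_unique[OF mA mB fib] by blast
  qed
  show ?thesis
  proof (rule iso_via[of "nth xs1" "{..<n}" V1 "nth xs2"])
    show "bij_betw ((!) xs1) {..<n} V1" using bij_betw_nth[OF A.dxs] A.sxs n_def by simp
    show "bij_betw ((!) xs2) {..<n} V2" using bij_betw_nth[OF B.dxs] B.sxs n_def len by simp
    fix i j assume i: "i \<in> {..<n}" and j: "j \<in> {..<n}"
    have "E1 (xs1 ! i) (xs1 ! j) \<longleftrightarrow> (j \<noteq> 0 \<and> i = A.P j) \<or> (i \<noteq> 0 \<and> j = A.P i)"
      using A.edge_nth i j n_def by simp
    also have "\<dots> \<longleftrightarrow> (j \<noteq> 0 \<and> i = B.P j) \<or> (i \<noteq> 0 \<and> j = B.P i)"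
    proof -
      have "j \<noteq> 0 \<Longrightarrow> A.P j = B.P j" "i \<noteq> 0 \<Longrightarrow> A.P i = B.P i" using Peq i j by auto
      then show ?thesis by auto
    qed
    also have "\<dots> \<longleftrightarrow> E2 (xs2 ! i) (xs2 ! j)"
      using B.edge_nth i j n_def len by simp
    finally show "E1 (xs1 ! i) (xs1 ! j) \<longleftrightarrow> E2 (xs2 ! i) (xs2 ! j)" .
  qed
qed




theorem lemma8:
  fixes \<pi> :: "nat multiset"
  assumes "tree_sequence \<pi>"
  shows "(\<exists>(V :: nat set) E. tree V E \<and> degree_sequence V E = \<pi> \<and> BFD_tree V E)
    \<and> (\<forall>(V1 :: 'a set) E1 (V2 :: 'b set) E2.
         tree V1 E1 \<and> degree_sequence V1 E1 = \<pi> \<and> BFD_tree V1 E1 \<and>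
         tree V2 E2 \<and> degree_sequence V2 E2 = \<pi> \<and> BFD_tree V2 E2
         \<longrightarrow> isomorphic V1 E1 V2 E2)"
proof (intro conjI allI impI)
  obtain V :: "nat set" and E where t: "tree V E" and ds: "degree_sequence V E = \<pi>"
    using assms unfolding tree_sequence_def by auto
  define d where "d = rev (sorted_list_of_multiset \<pi>)"
  have md: "mset d = \<pi>" unfolding d_def by simp
  have sd: "sorted (rev d)" unfolding d_def by simp
  have len: "length d = card V" using tree_facts(1)[OF t] ds md by (metis size_mset)
  interpret C: canon d
  proof
    show "1 \<le> length d" using len tree_facts(3)[OF t] by simp
    have "(\<Sum>i<length d. d ! i) = sum_list d"
      by (simp add: sum_list_sum_nth atLeast0LessThan)
    also have "\<dots> = sum_mset \<pi>" using md sum_mset_sum_list by metis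
    finally show "(\<Sum>i<length d. d ! i) = 2 * (length d - 1)"
      using tree_facts(2)[OF t] ds len by simp
  next
    fix i assume i: "1 \<le> i" "i < length d"
    have "d ! i \<in># \<pi>" using i md by (metis nth_mem set_mset_mset)
    then show "1 \<le> d ! i" using tree_pos[OF t] ds len i by simp
  next
    fix i j assume ij: "i \<le> j" "j < length d"
    have "rev d ! (length d - 1 - j) \<le> rev d ! (length d - 1 - i)"
      using sd ij unfolding sorted_iff_nth_mono by simp
    then show "d ! j \<le> d ! i" using ij by (simp add: rev_nth)
  qed
  show "\<exists>(V :: nat set) E. tree V E \<and> degree_sequence V E = \<pi> \<and> BFD_tree V E"
    using C.tree_c C.degseq_c md C.bfd_c unfolding BFD_tree_def by blast
next
  fix V1 :: "'a set" and E1 and V2 :: "'b set" and E2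
  assume h: "tree V1 E1 \<and> degree_sequence V1 E1 = \<pi> \<and> BFD_tree V1 E1 \<and>
         tree V2 E2 \<and> degree_sequence V2 E2 = \<pi> \<and> BFD_tree V2 E2"
  then obtain v1 xs1 v2 xs2 where "BFD_ordering V1 E1 v1 xs1" "BFD_ordering V2 E2 v2 xs2"
    unfolding BFD_tree_def by blast
  then show "isomorphic V1 E1 V2 E2" using bfd_iso h by metis
qed


end
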